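(* Let $\mathcal{A}$ be a strong $T_0$-family. For every $\delta>0$ there is $\varepsilon>0$ such that for every uncountable $(1-\varepsilon)$-separated set $\{x_\alpha:\alpha<\omega_1\}$ contained in the unit sphere of $\mathcal{X}_\mathcal{A}$ there are $\alpha<\beta<\omega_1$ with $\|x_\alpha-x_\beta\|_\mathcal{A}>\sqrt2-\delta$ and there are $\xi<\eta<\omega_1$ with $\|x_\xi-x_\eta\|_\mathcal{A}<1+\delta$.
   Context: A set $\mathcal{Y}$ is $\gamma$-separated if $\|y-y'\|\ge\gamma$ for distinct $y,y'\in\mathcal{Y}$. $c_{00}(\omega_1)$ is the set of finitely supported $x\in\mathbb{R}^{\omega_1}$; $\|x\|_\mathcal{A}=\sup_{A\in\mathcal{A}}\sqrt{\sum_{\alpha\in A}x(\alpha)^2}$ and $\mathcal{X}_\mathcal{A}$ is the closure of $c_{00}(\omega_1)$ in $\{x\in\mathbb{R}^{\omega_1}:\|x\|_\mathcal{A}<\infty\}$. For disjoint $A,B$, $A\otimes B=\{\{\alpha,\beta\}:\alpha\in A,\beta\in B\}$. A function $c=(c_0,c_1):[\omega_1]^2\to I\times J$ ($0,1\in I$, $J\ne\emptyset$) is a $T$-coloring if for every uncountable pairwise disjoint family $\{\{a_\xi(0),a_\xi(1)\}:\xi<\omega_1\}$ of pairs and all $(i_0,j_0),(i_1,j_1)\in I\times J$ there are $\xi<\eta$ with $c(\{a_\xi(0),a_\eta(0)\})=(i_0,j_0)$, $c(\{a_\xi(1),a_\eta(1)\})=(i_1,j_1)$; it is a strong $T$-coloring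 if moreover for every uncountable pairwise disjoint family $\{A_\xi:\xi<\omega_1\}$ of finite subsets of $\omega_1$ there are $\xi<\eta$ with $c_0[A_\xi\otimes A_\eta]=\{0\}$ and $\xi<\eta$ with $c_0[A_\xi\otimes A_\eta]=\{1\}$. A strong $T_0$-family is $\mathcal{A}_c=\{a\subseteq\omega_1\text{ finite}:c_0[[a]^2]\subseteq\{0\}\}$ for a strong $T$-coloring $c$. *)

theory Defs
  imports Complex_Main "HOL-Library.Countable_Set"
begin

text \<open>omega_1 is modelled by a well-ordered type 'w that is uncountable but all of whose
  proper initial segments are countable (this characterises omega_1 up to order isomorphism).\<close>
definition is_omega1 :: "'w::wellorder itself \<Rightarrow> bool" where
  "is_omega1 _ \<longleftrightarrow> \<not> countable (UNIV :: 'w set) \<and> (\<forall>a::'w. countable {b. b < a})"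

definition pairs_of :: "'a set \<Rightarrow> 'a set set" where
  "pairs_of S = {p. p \<subseteq> S \<and> card p = 2}"

definition otimes :: "'a set \<Rightarrow> 'a set \<Rightarrow> 'a set set" where
  "otimes A B = {{a, b} | a b. a \<in> A \<and> b \<in> B}"

definition T_coloring ::
  "('w::wellorder set \<Rightarrow> 'i::zero_neq_one \<times> 'j) \<Rightarrow> 'i set \<Rightarrow> 'j set \<Rightarrow> bool" where
  "T_coloring c I J \<longleftrightarrow>
     0 \<in> I \<and> 1 \<in> I \<and> J \<noteq> {} \<and>
     (\<forall>p \<in> pairs_of (UNIV :: 'w set). c p \<in> I \<times> J) \<and>
     (\<forall>a0 a1 :: 'w \<Rightarrow> 'w.
        (\<forall>\<xi>. a0 \<xi> \<noteq> a1 \<xi>) \<and>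
        (\<forall>\<xi> \<eta>. \<xi> \<noteq> \<eta> \<longrightarrow> {a0 \<xi>, a1 \<xi>} \<inter> {a0 \<eta>, a1 \<eta>} = {}) \<longrightarrow>
        (\<forall>t0 \<in> I \<times> J. \<forall>t1 \<in> I \<times> J.
           \<exists>\<xi> \<eta>. \<xi> < \<eta> \<and> c {a0 \<xi>, a0 \<eta>} = t0 \<and> c {a1 \<xi>, a1 \<eta>} = t1))"

definition strong_T_coloring ::
  "('w::wellorder set \<Rightarrow> 'i::zero_neq_one \<times> 'j) \<Rightarrow> 'i set \<Rightarrow> 'j set \<Rightarrow> bool" where
  "strong_T_coloring c I J \<longleftrightarrow>
     T_coloring c I J \<and>
     (\<forall>A :: 'w \<Rightarrow> 'w set.
        (\<forall>\<xi>. finite (A \<xi>) \<and> A \<xi> \<noteq> {}) \<and>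
        (\<forall>\<xi> \<eta>. \<xi> \<noteq> \<eta> \<longrightarrow> A \<xi> \<inter> A \<eta> = {}) \<longrightarrow>
        (\<exists>\<xi> \<eta>. \<xi> < \<eta> \<and> (fst \<circ> c) ` otimes (A \<xi>) (A \<eta>) = {0}) \<and>
        (\<exists>\<xi> \<eta>. \<xi> < \<eta> \<and> (fst \<circ> c) ` otimes (A \<xi>) (A \<eta>) = {1}))"

definition T0_family :: "('w set \<Rightarrow> 'i::zero \<times> 'j) \<Rightarrow> 'w set set" where
  "T0_family c = {a. finite a \<and> (fst \<circ> c) ` pairs_of a \<subseteq> {0}}"

definition normA :: "'w set set \<Rightarrow> ('w \<Rightarrow> real) \<Rightarrow> real" where
  "normA \<A> x = (SUP a \<in> \<A>. sqrt (\<Sum>\<alpha>\<in>a. (x \<alpha>)\<^sup>2))"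

definition finite_normA :: "'w set set \<Rightarrow> ('w \<Rightarrow> real) \<Rightarrow> bool" where
  "finite_normA \<A> x \<longleftrightarrow> bdd_above ((\<lambda>a. sqrt (\<Sum>\<alpha>\<in>a. (x \<alpha>)\<^sup>2)) ` \<A>)"

definition c00 :: "('w \<Rightarrow> real) set" where
  "c00 = {x. finite {\<alpha>. x \<alpha> \<noteq> 0}}"

definition XA :: "'w set set \<Rightarrow> ('w \<Rightarrow> real) set" where
  "XA \<A> = {x. finite_normA \<A> x \<and>
              (\<forall>e>0. \<exists>y \<in> c00. normA \<A> (\<lambda>\<alpha>. x \<alpha> - y \<alpha>) < e)}"

end

theory Submission
  imports Defs "HOL-Analysis.L2_Norm"
begin


lemma om1_unc: "is_omega1 TYPE('w::wellorder) \<Longrightarrow> uncountable (UNIV::'w set)"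
  by (simp add: is_omega1_def)

lemma om1_seg: "is_omega1 TYPE('w::wellorder) \<Longrightarrow> countable {b::'w. b < a}"
  by (simp add: is_omega1_def)

lemma om1_le: assumes "is_omega1 TYPE('w::wellorder)" "countable (C::'w set)"
  shows "countable {b. \<exists>c\<in>C. b \<le> c}"
proof -
  have "{b. \<exists>c\<in>C. b \<le> c} = (\<Union>c\<in>C. insert c {b. b < c})" by (auto simp: order_le_less)
  thus ?thesis using assms om1_seg[OF assms(1)] by (simp add: countable_UN)
qed

lemma om1_rec:
  assumes om: "is_omega1 TYPE('w::wellorder)"
  and ex: "\<And>C::'w set. countable C \<Longrightarrow> \<exists>w. P C w"
  shows "\<exists>f::'w \<Rightarrow> 'w. \<forall>\<xi>. P (f ` {\<zeta>. \<zeta> < \<xi>}) (f \<xi>)"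
proof -
  define F where "F = (\<lambda>g (\<xi>::'w). SOME w. P (g ` {\<zeta>. \<zeta> < \<xi>}) w)"
  define R where "R = {(x::'w, y). x < y}"
  define f where "f = wfrec R F"
  have wfR: "wf R" unfolding R_def by (rule wf)
  have "P (f ` {\<zeta>. \<zeta> < \<xi>}) (f \<xi>)" for \<xi>
  proof -
    have 1: "f \<xi> = F (cut f R \<xi>) \<xi>" unfolding f_def by (rule wfrec[OF wfR])
    have 2: "cut f R \<xi> ` {\<zeta>. \<zeta> < \<xi>} = f ` {\<zeta>. \<zeta> < \<xi>}"
      by (intro image_cong refl) (simp add: cut_apply R_def)
    have e: "f \<xi> = (SOME w. P (f ` {\<zeta>. \<zeta> < \<xi>}) w)" unfolding 1 F_def 2 ..
    have "countable (f ` {\<zeta>. \<zeta> < \<xi>})" using om1_seg[OF om] by simp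
    from ex[OF this] show ?thesis unfolding e by (rule someI_ex)
  qed
  thus ?thesis by blast
qed

lemma om1_mono_into:
  assumes om: "is_omega1 TYPE('w::wellorder)" and W: "uncountable (W::'w set)"
  shows "\<exists>f::'w\<Rightarrow>'w. strict_mono f \<and> range f \<subseteq> W"
proof -
  have ex0: "\<exists>w. w \<in> W \<and> (\<forall>c\<in>C. c < w)" if "countable C" for C :: "'w set"
  proof -
    have "countable {b. \<exists>c\<in>C. b \<le> c}" using om1_le[OF om that] .
    hence "\<not> W \<subseteq> {b. \<exists>c\<in>C. b \<le> c}" using W countable_subset[of W "{b. \<exists>c\<in>C. b \<le> c}"] by blast
    then obtain w where w: "w \<in> W" "w \<notin> {b. \<exists>c\<in>C. b \<le> c}" by (meson subsetI)
    have "\<forall>c\<in>C. c < w" using w(2) by (simp add: not_le)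
    thus ?thesis using w(1) by (intro exI[of _ w]) simp
  qed
  have "\<exists>f::'w\<Rightarrow>'w. \<forall>\<xi>. f \<xi> \<in> W \<and> (\<forall>c\<in>f ` {\<zeta>. \<zeta> < \<xi>}. c < f \<xi>)"
    by (rule om1_rec[OF om, where P="\<lambda>C w. w \<in> W \<and> (\<forall>c\<in>C. c < w)"]) (rule ex0)
  then obtain f :: "'w \<Rightarrow> 'w" where
    f: "\<And>\<xi>. f \<xi> \<in> W \<and> (\<forall>c\<in>f ` {\<zeta>. \<zeta> < \<xi>}. c < f \<xi>)"
    by blast
  have "strict_mono f" unfolding strict_mono_def
  proof (intro allI impI)
    fix a b :: 'w assume "a < b"
    hence "f a \<in> f ` {\<zeta>. \<zeta> < b}" by blast
    moreover have "\<forall>c\<in>f ` {\<zeta>. \<zeta> < b}. c < f b" using f[of b] by (rule conjunct2)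
    ultimately show "f a < f b" by (rule bspec[rotated])
  qed
  moreover have "range f \<subseteq> W"
  proof
    fix z assume "z \<in> range f"
    then obtain a where "z = f a" by (rule rangeE)
    thus "z \<in> W" using f[of a] by (simp only: conj_imp_eq_imp_imp)
  qed
  ultimately show ?thesis by (intro exI[of _ f]) simp
qed

lemma uncountable_fiber:
  assumes "uncountable W" "countable (g ` W)"
  shows "\<exists>v. uncountable {\<xi>\<in>W. g \<xi> = v}"
proof (rule ccontr)
  assume "\<not> ?thesis"
  hence "countable (\<Union>v\<in>g ` W. {\<xi>\<in>W. g \<xi> = v})" using assms(2) by (intro countable_UN) auto
  moreover have "(\<Union>v\<in>g ` W. {\<xi>\<in>W. g \<xi> = v}) = W" by auto
  ultimately show False using assms(1) by simp
qed

lemma delta_n: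
  assumes om: "is_omega1 TYPE('w::wellorder)"
  shows "uncountable (W::'w set) \<Longrightarrow> (\<forall>\<xi>\<in>W. finite (S \<xi>) \<and> card (S \<xi>) = n) \<Longrightarrow>
    \<exists>W'\<subseteq>W. uncountable W' \<and> (\<exists>r. \<forall>\<xi>\<in>W'. \<forall>\<eta>\<in>W'. \<xi> \<noteq> \<eta> \<longrightarrow> S \<xi> \<inter> S \<eta> = r)"
proof (induction n arbitrary: W S)
  case 0
  hence "\<forall>\<xi>\<in>W. S \<xi> = {}" by auto
  hence "\<forall>\<xi>\<in>W. \<forall>\<eta>\<in>W. \<xi> \<noteq> \<eta> \<longrightarrow> S \<xi> \<inter> S \<eta> = {}" by blast
  thus ?case using 0(1) by blast
next
  case (Suc n)
  show ?case
  proof (cases "\<exists>p. uncountable {\<xi>\<in>W. p \<in> S \<xi>}")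
    case True
    then obtain p where p: "uncountable {\<xi>\<in>W. p \<in> S \<xi>}" by blast
    have "\<forall>\<xi>\<in>{\<xi>\<in>W. p \<in> S \<xi>}. finite (S \<xi> - {p}) \<and> card (S \<xi> - {p}) = n"
      using Suc.prems(2) by (auto simp: card_Diff_singleton)
    hence "\<exists>W'\<subseteq>{\<xi>\<in>W. p \<in> S \<xi>}. uncountable W' \<and> (\<exists>r. \<forall>\<xi>\<in>W'. \<forall>\<eta>\<in>W'. \<xi> \<noteq> \<eta> \<longrightarrow> (S \<xi> - {p}) \<inter> (S \<eta> - {p}) = r)"
      by (rule Suc.IH[OF p])
    then obtain W' r where W': "W' \<subseteq> {\<xi>\<in>W. p \<in> S \<xi>}" "uncountable W'"
      "\<forall>\<xi>\<in>W'. \<forall>\<eta>\<in>W'. \<xi> \<noteq> \<eta> \<longrightarrow> (S \<xi> - {p}) \<inter> (S \<eta> - {p}) = r"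
      by (elim exE conjE) (rule that; assumption)
    have "\<forall>\<xi>\<in>W'. \<forall>\<eta>\<in>W'. \<xi> \<noteq> \<eta> \<longrightarrow> S \<xi> \<inter> S \<eta> = insert p r"
    proof (intro ballI impI)
      fix \<xi> \<eta> assume h: "\<xi> \<in> W'" "\<eta> \<in> W'" "\<xi> \<noteq> \<eta>"
      hence "p \<in> S \<xi>" "p \<in> S \<eta>" using W'(1) by auto
      moreover have "(S \<xi> - {p}) \<inter> (S \<eta> - {p}) = r" using W'(3) h by blast
      ultimately show "S \<xi> \<inter> S \<eta> = insert p r" by blast
    qed
    hence "\<exists>r. \<forall>\<xi>\<in>W'. \<forall>\<eta>\<in>W'. \<xi> \<noteq> \<eta> \<longrightarrow> S \<xi> \<inter> S \<eta> = r" by (rule exI)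
    moreover have "W' \<subseteq> W" using W'(1) by (rule subset_trans) (rule Collect_subset)
    ultimately show ?thesis using W'(2) by (intro exI[of _ W'] conjI)
  next
    case False
    hence cnt: "\<And>p. countable {\<xi>\<in>W. p \<in> S \<xi>}" by blast
    have ex0: "\<exists>w. w \<in> W \<and> (\<forall>c\<in>C \<inter> W. S w \<inter> S c = {})" if "countable C" for C :: "'w set"
    proof -
      define U where "U = (\<Union>c\<in>C \<inter> W. S c)"
      have "countable U" unfolding U_def using that Suc.prems(2)
        by (intro countable_UN) (auto intro: countable_finite)
      hence "countable (\<Union>p\<in>U. {\<xi>\<in>W. p \<in> S \<xi>})" using cnt by (intro countable_UN) auto
      hence "W - (\<Union>p\<in>U. {\<xi>\<in>W. p \<in> S \<xi>}) \<noteq> {}" using Suc.prems(1)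
        using countable_subset[of W "\<Union>p\<in>U. {\<xi>\<in>W. p \<in> S \<xi>}"] by blast
      then obtain w where "w \<in> W" "w \<notin> (\<Union>p\<in>U. {\<xi>\<in>W. p \<in> S \<xi>})" by blast
      thus ?thesis unfolding U_def by (intro exI[of _ w]) blast
    qed
    have "\<exists>f::'w\<Rightarrow>'w. \<forall>\<xi>. f \<xi> \<in> W \<and> (\<forall>c\<in>f ` {\<zeta>. \<zeta> < \<xi>} \<inter> W. S (f \<xi>) \<inter> S c = {})"
      by (rule om1_rec[OF om, where P="\<lambda>C w. w \<in> W \<and> (\<forall>c\<in>C \<inter> W. S w \<inter> S c = {})"]) (rule ex0)
    then obtain f :: "'w \<Rightarrow> 'w" where
      f: "\<And>\<xi>. f \<xi> \<in> W \<and> (\<forall>c\<in>f ` {\<zeta>. \<zeta> < \<xi>} \<inter> W. S (f \<xi>) \<inter> S c = {})" by blast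
    have disj: "S (f \<xi>) \<inter> S (f \<zeta>) = {}" if "\<zeta> \<noteq> \<xi>" for \<zeta> \<xi>
    proof (cases "\<zeta> < \<xi>")
      case True thus ?thesis using f[of \<xi>] f[of \<zeta>] by blast
    next
      case False hence "\<xi> < \<zeta>" using that by simp
      thus ?thesis using f[of \<xi>] f[of \<zeta>] by blast
    qed
    have ne: "S (f \<xi>) \<noteq> {}" for \<xi> using Suc.prems(2) f[of \<xi>] by fastforce
    have "inj f" unfolding inj_def using disj ne by fastforce
    hence "uncountable (range f)" using om1_unc[OF om] countable_image_inj_on by blast
    moreover have "\<forall>\<xi>\<in>range f. \<forall>\<eta>\<in>range f. \<xi> \<noteq> \<eta> \<longrightarrow> S \<xi> \<inter> S \<eta> = {}"
      using disj by (metis imageE)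
    hence "\<exists>r. \<forall>\<xi>\<in>range f. \<forall>\<eta>\<in>range f. \<xi> \<noteq> \<eta> \<longrightarrow> S \<xi> \<inter> S \<eta> = r" by (rule exI)
    moreover have "range f \<subseteq> W"
    proof
      fix z assume "z \<in> range f"
      then obtain a where "z = f a" by (rule rangeE)
      thus "z \<in> W" using f[of a] by simp
    qed
    ultimately show ?thesis by (intro exI[of _ "range f"] conjI)
  qed
qed

lemma delta:
  assumes om: "is_omega1 TYPE('w::wellorder)" and W: "uncountable (W::'w set)"
    and fin: "\<forall>\<xi>\<in>W. finite (S \<xi>)"
  shows "\<exists>W'\<subseteq>W. uncountable W' \<and> (\<exists>r. \<forall>\<xi>\<in>W'. \<forall>\<eta>\<in>W'. \<xi> \<noteq> \<eta> \<longrightarrow> S \<xi> \<inter> S \<eta> = r)"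
proof -
  have "countable ((\<lambda>\<xi>. card (S \<xi>)) ` W)" by (rule countableI_type)
  from uncountable_fiber[OF W this] obtain n where n: "uncountable {\<xi>\<in>W. card (S \<xi>) = n}"
    by (rule exE)
  have "\<forall>\<xi>\<in>{\<xi>\<in>W. card (S \<xi>) = n}. finite (S \<xi>) \<and> card (S \<xi>) = n" using fin by simp
  from delta_n[OF om n this] obtain W' where W'0: "W' \<subseteq> {\<xi>\<in>W. card (S \<xi>) = n} \<and> uncountable W' \<and>
    (\<exists>r. \<forall>\<xi>\<in>W'. \<forall>\<eta>\<in>W'. \<xi> \<noteq> \<eta> \<longrightarrow> S \<xi> \<inter> S \<eta> = r)"
    by (rule exE)
  note W' = conjunct1[OF W'0] conjunct1[OF conjunct2[OF W'0]] conjunct2[OF conjunct2[OF W'0]]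
  have "W' \<subseteq> W" using W'(1) by (rule subset_trans) (rule Collect_subset)
  thus ?thesis using W'(2,3) by (intro exI[of _ W'] conjI)
qed



lemma normA_L2: "normA \<A> x = (SUP a\<in>\<A>. L2_set x a)"
  unfolding normA_def L2_set_def ..

lemma finA_L2: "finite_normA \<A> x = bdd_above ((\<lambda>a. L2_set x a) ` \<A>)"
  unfolding finite_normA_def L2_set_def ..

lemma N_upper: "finite_normA \<A> x \<Longrightarrow> a \<in> \<A> \<Longrightarrow> L2_set x a \<le> normA \<A> x"
  unfolding normA_L2 finA_L2 by (rule cSUP_upper)

lemma N_least: "\<A> \<noteq> {} \<Longrightarrow> (\<And>a. a \<in> \<A> \<Longrightarrow> L2_set x a \<le> M) \<Longrightarrow> normA \<A> x \<le> M"
  unfolding normA_L2 by (rule cSUP_least)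

lemma fin_bound: "(\<And>a. a \<in> \<A> \<Longrightarrow> L2_set x a \<le> M) \<Longrightarrow> finite_normA \<A> x"
  unfolding finA_L2 bdd_above_def by blast

lemma N_nonneg: "finite_normA \<A> x \<Longrightarrow> {} \<in> \<A> \<Longrightarrow> 0 \<le> normA \<A> x"
  using N_upper[of \<A> x "{}"] by simp

lemma N_tri:
  assumes ne: "\<A> \<noteq> {}" and fp: "finite_normA \<A> p" and fq: "finite_normA \<A> q"
    and z: "\<And>\<gamma>. z \<gamma> = p \<gamma> + q \<gamma>"
  shows "finite_normA \<A> z \<and> normA \<A> z \<le> normA \<A> p + normA \<A> q"
proof -
  have b: "L2_set z a \<le> normA \<A> p + normA \<A> q" if "a \<in> \<A>" for a
  proof -
    have "L2_set z a = L2_set (\<lambda>\<gamma>. p \<gamma> + q \<gamma>) a" using z by (simp add: L2_set_def)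
    also have "\<dots> \<le> L2_set p a + L2_set q a" by (rule L2_set_triangle_ineq)
    also have "\<dots> \<le> normA \<A> p + normA \<A> q"
      using N_upper[OF fp that] N_upper[OF fq that] by simp
    finally show ?thesis .
  qed
  show ?thesis using fin_bound[OF b] N_least[OF ne b] by blast
qed

lemma N_absle:
  assumes ne: "\<A> \<noteq> {}" and fp: "finite_normA \<A> p" and z: "\<And>\<gamma>. \<bar>z \<gamma>\<bar> \<le> \<bar>p \<gamma>\<bar>"
  shows "finite_normA \<A> z \<and> normA \<A> z \<le> normA \<A> p"
proof -
  have b: "L2_set z a \<le> normA \<A> p" if "a \<in> \<A>" for a
  proof -
    have "L2_set z a \<le> L2_set p a" unfolding L2_set_def
      by (intro real_sqrt_le_mono sum_mono) (metis abs_ge_zero abs_le_square_iff z)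
    also have "\<dots> \<le> normA \<A> p" using N_upper[OF fp that] .
    finally show ?thesis .
  qed
  show ?thesis using fin_bound[OF b] N_least[OF ne b] by blast
qed

lemma N_sym: "normA \<A> (\<lambda>\<gamma>. p \<gamma> - q \<gamma>) = normA \<A> (\<lambda>\<gamma>. q \<gamma> - p \<gamma>)"
  unfolding normA_def by (simp add: power2_commute)

lemma finA_sym: "finite_normA \<A> (\<lambda>\<gamma>. p \<gamma> - q \<gamma>) = finite_normA \<A> (\<lambda>\<gamma>. q \<gamma> - p \<gamma>)"
  unfolding finite_normA_def by (simp add: power2_commute)

lemma N_diff:
  assumes ne: "\<A> \<noteq> {}" and fp: "finite_normA \<A> p" and fq: "finite_normA \<A> q"
  shows "finite_normA \<A> (\<lambda>\<gamma>. p \<gamma> - q \<gamma>)"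
proof -
  have "finite_normA \<A> (\<lambda>\<gamma>. - q \<gamma>)" using N_absle[OF ne fq, of "\<lambda>\<gamma>. - q \<gamma>"] by simp
  from N_tri[OF ne fp this, of "\<lambda>\<gamma>. p \<gamma> - q \<gamma>"] show ?thesis by simp
qed

lemma N_tri3:
  assumes ne: "\<A> \<noteq> {}" and f1: "finite_normA \<A> (\<lambda>\<gamma>. p \<gamma> - q \<gamma>)"
    and f2: "finite_normA \<A> (\<lambda>\<gamma>. q \<gamma> - s \<gamma>)"
  shows "normA \<A> (\<lambda>\<gamma>. p \<gamma> - s \<gamma>) \<le> normA \<A> (\<lambda>\<gamma>. p \<gamma> - q \<gamma>) + normA \<A> (\<lambda>\<gamma>. q \<gamma> - s \<gamma>)"
  using N_tri[OF ne f1 f2, of "\<lambda>\<gamma>. p \<gamma> - s \<gamma>"] by simp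

lemma fin_support:
  assumes fa: "\<forall>a\<in>\<A>. finite a" and fs: "finite {\<alpha>. y \<alpha> \<noteq> 0}"
  shows "finite_normA \<A> y"
proof (rule fin_bound)
  fix a assume a: "a \<in> \<A>"
  let ?s = "{\<alpha>. y \<alpha> \<noteq> 0}"
  have "(\<Sum>\<alpha>\<in>a. (y \<alpha>)\<^sup>2) = (\<Sum>\<alpha>\<in>a \<inter> ?s. (y \<alpha>)\<^sup>2)"
    using fa a by (intro sum.mono_neutral_right) auto
  also have "\<dots> \<le> (\<Sum>\<alpha>\<in>?s. (y \<alpha>)\<^sup>2)" using fs by (intro sum_mono2) auto
  finally show "L2_set y a \<le> L2_set y ?s" unfolding L2_set_def by simp
qed

lemma coord_le: "finite_normA \<A> y \<Longrightarrow> {\<alpha>} \<in> \<A> \<Longrightarrow> \<bar>y \<alpha>\<bar> \<le> normA \<A> y"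
  using N_upper[of \<A> y "{\<alpha>}"] by (simp add: L2_set_def)

lemma L2_restrict: "finite a \<Longrightarrow> L2_set (\<lambda>\<alpha>. if \<alpha> \<in> T then g \<alpha> else 0) a = L2_set g (a \<inter> T)"
  unfolding L2_set_def by (simp add: sum.inter_restrict if_distrib[of "\<lambda>t. t\<^sup>2"] cong: if_cong)

lemma L2_subset: "finite B \<Longrightarrow> A \<subseteq> B \<Longrightarrow> L2_set f A \<le> L2_set f B"
  unfolding L2_set_def by (intro real_sqrt_le_mono sum_mono2) auto

lemma floor_eq_close: "\<lfloor>u::real\<rfloor> = \<lfloor>v\<rfloor> \<Longrightarrow> \<bar>u - v\<bar> < 1"
proof -
  assume h: "\<lfloor>u::real\<rfloor> = \<lfloor>v\<rfloor>"
  have f: "of_int \<lfloor>u\<rfloor> \<le> u" "u < of_int \<lfloor>u\<rfloor> + 1" "of_int \<lfloor>v\<rfloor> \<le> v" "v < of_int \<lfloor>v\<rfloor> + 1"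
    by linarith+
  have "real_of_int \<lfloor>u\<rfloor> = real_of_int \<lfloor>v\<rfloor>" using h by simp
  thus ?thesis unfolding abs_less_iff using f by linarith
qed



lemma T0_fin: "a \<in> T0_family c \<Longrightarrow> finite a"
  unfolding T0_family_def by simp

lemma T0_empty: "{} \<in> T0_family c"
  unfolding T0_family_def pairs_of_def by auto

lemma T0_single: "{\<alpha>} \<in> T0_family c"
proof -
  have "pairs_of {\<alpha>} = {}" unfolding pairs_of_def
    by (auto simp: subset_singleton_iff)
  thus ?thesis unfolding T0_family_def by simp
qed

lemma T0_sub: "a \<in> T0_family c \<Longrightarrow> b \<subseteq> a \<Longrightarrow> b \<in> T0_family c"
  unfolding T0_family_def pairs_of_def image_subset_iff by (auto intro: finite_subset)

lemma T0_pair: "a \<in> T0_family c \<Longrightarrow> u \<in> a \<Longrightarrow> v \<in> a \<Longrightarrow> u \<noteq> v \<Longrightarrow> fst (c {u, v}) = 0"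
  unfolding T0_family_def pairs_of_def image_subset_iff by auto

lemma T0_union:
  fixes c :: "'w set \<Rightarrow> 'i::zero_neq_one \<times> 'j"
  assumes a: "a \<in> T0_family c" and b: "b \<in> T0_family c"
    and col: "\<And>u v. u \<in> a \<Longrightarrow> v \<in> b \<Longrightarrow> fst (c {u, v}) = 0"
  shows "a \<union> b \<in> T0_family c"
proof -
  have "fst (c p) = 0" if p: "p \<subseteq> a \<union> b" "card p = 2" for p
  proof -
    obtain u v where uv: "p = {u, v}" "u \<noteq> v" using p(2) card_2_iff by metis
    have vu: "{v, u} = p" using uv(1) by blast
    have "u \<in> a \<union> b" "v \<in> a \<union> b" using p uv by auto
    then consider "u \<in> a" "v \<in> a" | "u \<in> a" "v \<in> b" | "u \<in> b" "v \<in> a" | "u \<in> b" "v \<in> b" by blast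
    thus ?thesis
    proof cases
      case 1 thus ?thesis using T0_pair[OF a _ _ uv(2)] uv(1) by simp
    next
      case 2 thus ?thesis using col[of u v] uv(1) by simp
    next
      case 3 thus ?thesis using col[of v u] vu by simp
    next
      case 4 thus ?thesis using T0_pair[OF b _ _ uv(2)] uv(1) by simp
    qed
  qed
  thus ?thesis using T0_fin[OF a] T0_fin[OF b] unfolding T0_family_def pairs_of_def by auto
qed



lemma main_lemma:
  fixes c :: "'w::wellorder set \<Rightarrow> 'i::zero_neq_one \<times> 'j"
    and x :: "'w \<Rightarrow> 'w \<Rightarrow> real"
  assumes om: "is_omega1 TYPE('w)"
    and strong: "strong_T_coloring c I J"
    and e0: "e > 0" and e\<delta>: "e \<le> \<delta>/12" and e1: "e \<le> 1/12"
    and unit: "\<forall>\<alpha>. x \<alpha> \<in> XA (T0_family c) \<and> normA (T0_family c) (x \<alpha>) = 1"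
    and sep: "\<forall>\<alpha> \<beta>. \<alpha> \<noteq> \<beta> \<longrightarrow> normA (T0_family c) (\<lambda>\<gamma>. x \<alpha> \<gamma> - x \<beta> \<gamma>) \<ge> 1 - e"
  shows "(\<exists>\<alpha> \<beta>. \<alpha> < \<beta> \<and> normA (T0_family c) (\<lambda>\<gamma>. x \<alpha> \<gamma> - x \<beta> \<gamma>) > sqrt 2 - \<delta>) \<and>
         (\<exists>\<xi> \<eta>. \<xi> < \<eta> \<and> normA (T0_family c) (\<lambda>\<gamma>. x \<xi> \<gamma> - x \<eta> \<gamma>) < 1 + \<delta>)"
proof -
  let ?A = "T0_family c"
  let ?N = "normA ?A"
  have Ane: "?A \<noteq> {}" using T0_empty by blast
  have Afin: "\<forall>a\<in>?A. finite a" using T0_fin by blast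
  have finx: "\<And>\<xi>. finite_normA ?A (x \<xi>)" using unit unfolding XA_def by blast
  have Nx: "\<And>\<xi>. ?N (x \<xi>) = 1" using unit by blast
  have "\<forall>\<xi>. \<exists>z. z \<in> c00 \<and> ?N (\<lambda>\<gamma>. x \<xi> \<gamma> - z \<gamma>) < e" using unit e0 unfolding XA_def by blast
  then obtain y where yc: "\<And>\<xi>. y \<xi> \<in> c00" and yx: "\<And>\<xi>. ?N (\<lambda>\<gamma>. x \<xi> \<gamma> - y \<xi> \<gamma>) < e" by metis
  have suppfin: "\<And>\<xi>. finite {\<alpha>. y \<xi> \<alpha> \<noteq> 0}" using yc unfolding c00_def by blast
  have finy: "\<And>\<xi>. finite_normA ?A (y \<xi>)" using fin_support[OF Afin suppfin] .
  have finxy: "\<And>\<xi> \<eta>. finite_normA ?A (\<lambda>\<gamma>. x \<xi> \<gamma> - y \<eta> \<gamma>)" by (rule N_diff[OF Ane finx finy])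
  have finyx: "\<And>\<xi> \<eta>. finite_normA ?A (\<lambda>\<gamma>. y \<xi> \<gamma> - x \<eta> \<gamma>)" by (rule N_diff[OF Ane finy finx])
  have finyy: "\<And>\<xi> \<eta>. finite_normA ?A (\<lambda>\<gamma>. y \<xi> \<gamma> - y \<eta> \<gamma>)" by (rule N_diff[OF Ane finy finy])
  have finxx: "\<And>\<xi> \<eta>. finite_normA ?A (\<lambda>\<gamma>. x \<xi> \<gamma> - x \<eta> \<gamma>)" by (rule N_diff[OF Ane finx finx])
  have Ny: "?N (y \<xi>) \<le> 1 + e" for \<xi>
  proof -
    have "?N (y \<xi>) \<le> ?N (x \<xi>) + ?N (\<lambda>\<gamma>. y \<xi> \<gamma> - x \<xi> \<gamma>)"
      using N_tri[OF Ane finx[of \<xi>] finyx[of \<xi> \<xi>], of "y \<xi>"] by simp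
    thus ?thesis using Nx[of \<xi>] yx[of \<xi>] N_sym[of ?A "y \<xi>" "x \<xi>"] by linarith
  qed
  have xy_up: "?N (\<lambda>\<gamma>. x \<xi> \<gamma> - x \<eta> \<gamma>) \<le> ?N (\<lambda>\<gamma>. y \<xi> \<gamma> - y \<eta> \<gamma>) + 2*e" for \<xi> \<eta>
  proof -
    have 1: "?N (\<lambda>\<gamma>. x \<xi> \<gamma> - x \<eta> \<gamma>) \<le> ?N (\<lambda>\<gamma>. x \<xi> \<gamma> - y \<xi> \<gamma>) + ?N (\<lambda>\<gamma>. y \<xi> \<gamma> - x \<eta> \<gamma>)"
      by (rule N_tri3[OF Ane finxy finyx])
    have 2: "?N (\<lambda>\<gamma>. y \<xi> \<gamma> - x \<eta> \<gamma>) \<le> ?N (\<lambda>\<gamma>. y \<xi> \<gamma> - y \<eta> \<gamma>) + ?N (\<lambda>\<gamma>. y \<eta> \<gamma> - x \<eta> \<gamma>)"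
      by (rule N_tri3[OF Ane finyy finyx])
    show ?thesis using 1 2 yx[of \<xi>] yx[of \<eta>] N_sym[of ?A "y \<eta>" "x \<eta>"] by linarith
  qed
  have xy_low: "?N (\<lambda>\<gamma>. y \<xi> \<gamma> - y \<eta> \<gamma>) \<le> ?N (\<lambda>\<gamma>. x \<xi> \<gamma> - x \<eta> \<gamma>) + 2*e" for \<xi> \<eta>
  proof -
    have 1: "?N (\<lambda>\<gamma>. y \<xi> \<gamma> - y \<eta> \<gamma>) \<le> ?N (\<lambda>\<gamma>. y \<xi> \<gamma> - x \<xi> \<gamma>) + ?N (\<lambda>\<gamma>. x \<xi> \<gamma> - y \<eta> \<gamma>)"
      by (rule N_tri3[OF Ane finyx finxy])
    have 2: "?N (\<lambda>\<gamma>. x \<xi> \<gamma> - y \<eta> \<gamma>) \<le> ?N (\<lambda>\<gamma>. x \<xi> \<gamma> - x \<eta> \<gamma>) + ?N (\<lambda>\<gamma>. x \<eta> \<gamma> - y \<eta> \<gamma>)"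
      by (rule N_tri3[OF Ane finxx finxy])
    show ?thesis using 1 2 yx[of \<xi>] yx[of \<eta>] N_sym[of ?A "y \<xi>" "x \<xi>"] by linarith
  qed

  define S where "S \<xi> = insert \<xi> {\<alpha>. y \<xi> \<alpha> \<noteq> 0}" for \<xi>
  have Sfin: "\<forall>\<xi>\<in>UNIV. finite (S \<xi>)" using suppfin by (simp add: S_def)
  have Y0: "\<And>\<xi> \<alpha>. \<alpha> \<notin> S \<xi> \<Longrightarrow> y \<xi> \<alpha> = 0" by (auto simp: S_def)
  from delta[OF om om1_unc[OF om] Sfin] obtain W1 where
    W1a: "W1 \<subseteq> UNIV \<and> uncountable W1 \<and> (\<exists>r. \<forall>\<xi>\<in>W1. \<forall>\<eta>\<in>W1. \<xi> \<noteq> \<eta> \<longrightarrow> S \<xi> \<inter> S \<eta> = r)"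
    by (rule exE)
  have W1: "uncountable W1" using conjunct1[OF conjunct2[OF W1a]] .
  from conjunct2[OF conjunct2[OF W1a]] obtain r where
    r: "\<forall>\<xi>\<in>W1. \<forall>\<eta>\<in>W1. \<xi> \<noteq> \<eta> \<longrightarrow> S \<xi> \<inter> S \<eta> = r" by (rule exE)
  have root: "\<And>\<xi> \<eta>. \<xi>\<in>W1 \<Longrightarrow> \<eta>\<in>W1 \<Longrightarrow> \<xi>\<noteq>\<eta> \<Longrightarrow> S \<xi> \<inter> S \<eta> = r"
    using r by simp
  have "infinite W1"
  proof
    assume "finite W1"
    hence "countable W1" by (rule countable_finite)
    thus False using W1 by simp
  qed
  then obtain \<xi>0 where \<xi>0: "\<xi>0 \<in> W1" by (metis ex_in_conv finite.emptyI)
  have "infinite (W1 - {\<xi>0})" using \<open>infinite W1\<close> by simp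
  then obtain \<eta>0 where \<eta>0: "\<eta>0 \<in> W1 - {\<xi>0}" by (metis ex_in_conv finite.emptyI)
  have rfin: "finite r" using root[of \<xi>0 \<eta>0] \<xi>0 \<eta>0 Sfin by auto
  define T where "T \<xi> = S \<xi> - r" for \<xi>
  define W1' where "W1' = W1 - r"
  have W1'u: "uncountable W1'"
  proof
    assume "countable W1'"
    hence c: "countable (W1' \<union> r)" using countable_finite[OF rfin] by (rule countable_Un)
    have "W1 \<subseteq> W1' \<union> r" unfolding W1'_def by blast
    from countable_subset[OF this c] show False using W1 by simp
  qed
  have Tne: "\<And>\<xi>. \<xi> \<in> W1' \<Longrightarrow> T \<xi> \<noteq> {}" by (auto simp: T_def W1'_def S_def)
  have Tfin: "\<And>\<xi>. finite (T \<xi>)" using Sfin by (simp add: T_def)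
  have TS: "\<And>\<xi> \<eta>. \<xi>\<in>W1 \<Longrightarrow> \<eta>\<in>W1 \<Longrightarrow> \<xi>\<noteq>\<eta> \<Longrightarrow> T \<xi> \<inter> S \<eta> = {}"
    unfolding T_def using root by blast
  have TT: "\<And>\<xi> \<eta>. \<xi>\<in>W1 \<Longrightarrow> \<eta>\<in>W1 \<Longrightarrow> \<xi>\<noteq>\<eta> \<Longrightarrow> T \<xi> \<inter> T \<eta> = {}"
    using TS unfolding T_def by blast
  define yT where "yT \<xi> = (\<lambda>\<alpha>. if \<alpha> \<in> T \<xi> then y \<xi> \<alpha> else 0)" for \<xi>
  define \<tau> where "\<tau> \<xi> = ?N (yT \<xi>)" for \<xi>
  have yT_aux: "\<And>\<xi> \<gamma>. \<bar>yT \<xi> \<gamma>\<bar> \<le> \<bar>y \<xi> \<gamma>\<bar>" by (simp add: yT_def)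
  have finyT: "\<And>\<xi>. finite_normA ?A (yT \<xi>)" using N_absle[OF Ane finy yT_aux] by blast
  have \<tau>le: "\<And>\<xi>. \<tau> \<xi> \<le> 1 + e" using N_absle[OF Ane finy yT_aux] Ny unfolding \<tau>_def by (meson order_trans)

  define g where "g = e / (card r + 1)"
  have g0: "g > 0" using e0 by (simp add: g_def)
  define key where "key \<xi> = ((\<lambda>\<alpha>. (\<alpha>, \<lfloor>y \<xi> \<alpha> / g\<rfloor>)) ` r, \<lfloor>\<tau> \<xi> / e\<rfloor>)" for \<xi>
  have ksub: "key ` W1' \<subseteq> {B. finite B \<and> B \<subseteq> r \<times> (UNIV::int set)} \<times> (UNIV :: int set)"
    using rfin by (auto simp: key_def)
  have kc: "countable ({B. finite B \<and> B \<subseteq> r \<times> (UNIV::int set)} \<times> (UNIV :: int set))"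
    using rfin by (intro countable_SIGMA countable_Collect_finite_subset) (auto intro: countable_finite)
  have "countable (key ` W1')" by (rule countable_subset[OF ksub kc])
  from uncountable_fiber[OF W1'u this] obtain v where W2u: "uncountable {\<xi>\<in>W1'. key \<xi> = v}" by (rule exE)
  define W2 where "W2 = {\<xi>\<in>W1'. key \<xi> = v}"
  have W2u': "uncountable W2" using W2u W2_def by simp
  have W21: "W2 \<subseteq> W1" unfolding W2_def W1'_def by blast
  have W21': "W2 \<subseteq> W1'" unfolding W2_def by blast
  have close_y: "\<bar>y \<xi> \<alpha> - y \<eta> \<alpha>\<bar> < g" if "\<xi> \<in> W2" "\<eta> \<in> W2" "\<alpha> \<in> r" for \<xi> \<eta> \<alpha>
  proof -
    have "key \<xi> = key \<eta>" using that unfolding W2_def by simp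
    hence eqi: "(\<lambda>\<alpha>. (\<alpha>, \<lfloor>y \<xi> \<alpha> / g\<rfloor>)) ` r = (\<lambda>\<alpha>. (\<alpha>, \<lfloor>y \<eta> \<alpha> / g\<rfloor>)) ` r"
      unfolding key_def by simp
    have "(\<alpha>, \<lfloor>y \<xi> \<alpha> / g\<rfloor>) \<in> (\<lambda>\<alpha>. (\<alpha>, \<lfloor>y \<xi> \<alpha> / g\<rfloor>)) ` r"
      using that(3) by (rule imageI)
    hence "(\<alpha>, \<lfloor>y \<xi> \<alpha> / g\<rfloor>) \<in> (\<lambda>\<alpha>. (\<alpha>, \<lfloor>y \<eta> \<alpha> / g\<rfloor>)) ` r"
      unfolding eqi .
    hence "\<lfloor>y \<xi> \<alpha> / g\<rfloor> = \<lfloor>y \<eta> \<alpha> / g\<rfloor>" by auto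
    hence "\<bar>y \<xi> \<alpha> / g - y \<eta> \<alpha> / g\<bar> < 1" by (rule floor_eq_close)
    hence "\<bar>(y \<xi> \<alpha> - y \<eta> \<alpha>) / g\<bar> < 1" by (simp only: diff_divide_distrib)
    hence "\<bar>y \<xi> \<alpha> - y \<eta> \<alpha>\<bar> / g < 1" using g0 by (simp only: abs_divide abs_of_pos)
    thus ?thesis using g0 by (simp only: pos_divide_less_eq mult_1)
  qed
  have close_tau: "\<bar>\<tau> \<xi> - \<tau> \<eta>\<bar> < e" if "\<xi> \<in> W2" "\<eta> \<in> W2" for \<xi> \<eta>
  proof -
    have "key \<xi> = key \<eta>" using that unfolding W2_def by simp
    hence "\<lfloor>\<tau> \<xi> / e\<rfloor> = \<lfloor>\<tau> \<eta> / e\<rfloor>" unfolding key_def by simp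
    hence "\<bar>\<tau> \<xi> / e - \<tau> \<eta> / e\<bar> < 1" by (rule floor_eq_close)
    hence "\<bar>(\<tau> \<xi> - \<tau> \<eta>) / e\<bar> < 1" by (simp only: diff_divide_distrib)
    hence "\<bar>\<tau> \<xi> - \<tau> \<eta>\<bar> / e < 1" using e0 by (simp only: abs_divide abs_of_pos)
    thus ?thesis using e0 by (simp only: pos_divide_less_eq mult_1)
  qed
  have root_close: "L2_set (\<lambda>\<alpha>. y \<xi> \<alpha> - y \<eta> \<alpha>) r \<le> e" if "\<xi> \<in> W2" "\<eta> \<in> W2" for \<xi> \<eta>
  proof -
    have "L2_set (\<lambda>\<alpha>. y \<xi> \<alpha> - y \<eta> \<alpha>) r \<le> (\<Sum>\<alpha>\<in>r. \<bar>y \<xi> \<alpha> - y \<eta> \<alpha>\<bar>)" by (rule L2_set_le_sum_abs)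
    also have "\<dots> \<le> of_nat (card r) * g" using close_y[OF that] by (intro sum_bounded_above) (simp add: less_imp_le)
    also have "\<dots> \<le> e" using e0 by (simp add: g_def field_simps)
    finally show ?thesis .
  qed

  have upper: "?N (\<lambda>\<gamma>. y \<xi> \<gamma> - y \<eta> \<gamma>) \<le> e + max (\<tau> \<xi>) (\<tau> \<eta>)"
    if xi: "\<xi> \<in> W2" and eta: "\<eta> \<in> W2" and ne: "\<xi> \<noteq> \<eta>"
      and col: "\<And>u v. u \<in> T \<xi> \<Longrightarrow> v \<in> T \<eta> \<Longrightarrow> fst (c {u, v}) = 1" for \<xi> \<eta>
  proof (rule N_least[OF Ane])
    fix a assume a: "a \<in> ?A"
    have afin: "finite a" using T0_fin[OF a] .
    let ?d = "\<lambda>\<gamma>. y \<xi> \<gamma> - y \<eta> \<gamma>"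
    have TT': "T \<xi> \<inter> T \<eta> = {}" using TT[of \<xi> \<eta>] xi eta ne W21 by blast
    have noboth: "a \<inter> T \<xi> = {} \<or> a \<inter> T \<eta> = {}"
    proof (rule ccontr)
      assume "\<not> ?thesis"
      then obtain u v where uv: "u \<in> a" "u \<in> T \<xi>" "v \<in> a" "v \<in> T \<eta>" by blast
      hence "u \<noteq> v" using TT' by blast
      hence "fst (c {u, v}) = 0" using T0_pair[OF a uv(1) uv(3)] by simp
      moreover have "fst (c {u, v}) = 1" using col uv by blast
      ultimately show False by simp
    qed
    have "L2_set ?d a = L2_set (\<lambda>\<alpha>. (if \<alpha> \<in> r then ?d \<alpha> else 0) + (if \<alpha> \<in> r then 0 else ?d \<alpha>)) a"
      by (rule L2_set_cong) auto
    also have "\<dots> \<le> L2_set (\<lambda>\<alpha>. if \<alpha> \<in> r then ?d \<alpha> else 0) a + L2_set (\<lambda>\<alpha>. if \<alpha> \<in> r then 0 else ?d \<alpha>) a"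
      by (rule L2_set_triangle_ineq)
    also have "L2_set (\<lambda>\<alpha>. if \<alpha> \<in> r then ?d \<alpha> else 0) a \<le> e"
    proof -
      have "L2_set (\<lambda>\<alpha>. if \<alpha> \<in> r then ?d \<alpha> else 0) a = L2_set ?d (a \<inter> r)" by (rule L2_restrict[OF afin])
      also have "\<dots> \<le> L2_set ?d r" using rfin by (intro L2_subset) auto
      also have "\<dots> \<le> e" using root_close[OF xi eta] .
      finally show ?thesis .
    qed
    also have "L2_set (\<lambda>\<alpha>. if \<alpha> \<in> r then 0 else ?d \<alpha>) a \<le> max (\<tau> \<xi>) (\<tau> \<eta>)"
      using noboth
    proof
      assume h: "a \<inter> T \<xi> = {}"
      have "L2_set (\<lambda>\<alpha>. if \<alpha> \<in> r then 0 else ?d \<alpha>) a = L2_set (yT \<eta>) a"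
        unfolding L2_set_def
      proof (intro arg_cong[where f=sqrt] sum.cong refl)
        fix \<alpha> assume "\<alpha> \<in> a"
        hence "\<alpha> \<notin> T \<xi>" using h by blast
        thus "(if \<alpha> \<in> r then 0 else ?d \<alpha>)\<^sup>2 = (yT \<eta> \<alpha>)\<^sup>2"
          using Y0[of \<alpha> \<xi>] Y0[of \<alpha> \<eta>] by (auto simp: yT_def T_def)
      qed
      also have "\<dots> \<le> \<tau> \<eta>" unfolding \<tau>_def by (rule N_upper[OF finyT a])
      finally show ?thesis by linarith
    next
      assume h: "a \<inter> T \<eta> = {}"
      have "L2_set (\<lambda>\<alpha>. if \<alpha> \<in> r then 0 else ?d \<alpha>) a = L2_set (yT \<xi>) a"
        unfolding L2_set_def
      proof (intro arg_cong[where f=sqrt] sum.cong refl)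
        fix \<alpha> assume "\<alpha> \<in> a"
        hence "\<alpha> \<notin> T \<eta>" using h by blast
        thus "(if \<alpha> \<in> r then 0 else ?d \<alpha>)\<^sup>2 = (yT \<xi> \<alpha>)\<^sup>2"
          using Y0[of \<alpha> \<xi>] Y0[of \<alpha> \<eta>] by (auto simp: yT_def T_def)
      qed
      also have "\<dots> \<le> \<tau> \<xi>" unfolding \<tau>_def by (rule N_upper[OF finyT a])
      finally show ?thesis by linarith
    qed
    finally show "L2_set ?d a \<le> e + max (\<tau> \<xi>) (\<tau> \<eta>)" by linarith
  qed

  obtain f :: "'w \<Rightarrow> 'w" where f: "strict_mono f" "range f \<subseteq> W2" using om1_mono_into[OF om W2u'] by blast
  have fW: "\<And>\<zeta>. f \<zeta> \<in> W2" using f(2) by blast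
  have stc: "\<And>A::'w \<Rightarrow> 'w set. (\<forall>\<xi>. finite (A \<xi>) \<and> A \<xi> \<noteq> {}) \<and> (\<forall>\<xi> \<eta>. \<xi> \<noteq> \<eta> \<longrightarrow> A \<xi> \<inter> A \<eta> = {}) \<Longrightarrow>
        (\<exists>\<xi> \<eta>. \<xi> < \<eta> \<and> (fst \<circ> c) ` otimes (A \<xi>) (A \<eta>) = {0}) \<and>
        (\<exists>\<xi> \<eta>. \<xi> < \<eta> \<and> (fst \<circ> c) ` otimes (A \<xi>) (A \<eta>) = {1})"
    using strong unfolding strong_T_coloring_def by blast
  have hypA: "(\<forall>\<zeta>. finite (T (f \<zeta>)) \<and> T (f \<zeta>) \<noteq> {}) \<and> (\<forall>\<zeta> \<eta>. \<zeta> \<noteq> \<eta> \<longrightarrow> T (f \<zeta>) \<inter> T (f \<eta>) = {})"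
  proof (intro conjI allI impI)
    fix \<zeta> show "finite (T (f \<zeta>))" by (rule Tfin)
    show "T (f \<zeta>) \<noteq> {}" using Tne fW W21' by blast
  next
    fix \<zeta> \<eta> :: 'w assume "\<zeta> \<noteq> \<eta>"
    hence "f \<zeta> \<noteq> f \<eta>" using strict_mono_eq[OF f(1)] by blast
    thus "T (f \<zeta>) \<inter> T (f \<eta>) = {}" using TT fW W21 by blast
  qed
  have otI: "\<And>u v A B. u \<in> A \<Longrightarrow> v \<in> B \<Longrightarrow> {u, v} \<in> otimes A B" unfolding otimes_def by blast
  from stc[OF hypA] obtain \<zeta>0 \<eta>0 \<zeta>1 \<eta>1 where
    z: "\<zeta>0 < \<eta>0" "(fst \<circ> c) ` otimes (T (f \<zeta>0)) (T (f \<eta>0)) = {0}" and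
    o: "\<zeta>1 < \<eta>1" "(fst \<circ> c) ` otimes (T (f \<zeta>1)) (T (f \<eta>1)) = {1}" by blast
  have col0: "\<And>u v. u \<in> T (f \<zeta>0) \<Longrightarrow> v \<in> T (f \<eta>0) \<Longrightarrow> fst (c {u, v}) = 0"
    using z(2) otI by (metis comp_apply image_eqI singletonD)
  have col1: "\<And>u v. u \<in> T (f \<zeta>1) \<Longrightarrow> v \<in> T (f \<eta>1) \<Longrightarrow> fst (c {u, v}) = 1"
    using o(2) otI by (metis comp_apply image_eqI singletonD)

  define \<xi>1 where "\<xi>1 = f \<zeta>1"
  define \<eta>1' where "\<eta>1' = f \<eta>1"
  have lt1: "\<xi>1 < \<eta>1'" using o(1) f(1) unfolding \<xi>1_def \<eta>1'_def by (simp add: strict_mono_less)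
  have up1: "?N (\<lambda>\<gamma>. x \<xi>1 \<gamma> - x \<eta>1' \<gamma>) \<le> 3*e + max (\<tau> \<xi>1) (\<tau> \<eta>1')"
    using upper[of \<xi>1 \<eta>1'] col1 fW lt1 xy_up[of \<xi>1 \<eta>1'] unfolding \<xi>1_def \<eta>1'_def by fastforce
  have "1 - e \<le> ?N (\<lambda>\<gamma>. x \<xi>1 \<gamma> - x \<eta>1' \<gamma>)" using sep lt1 by auto
  hence big: "max (\<tau> \<xi>1) (\<tau> \<eta>1') \<ge> 1 - 4*e" using up1 by linarith
  have \<tau>big: "\<tau> \<xi> \<ge> 1 - 5*e" if "\<xi> \<in> W2" for \<xi>
    using big close_tau[OF that fW[of \<zeta>1]] close_tau[OF that fW[of \<eta>1]]
    unfolding \<xi>1_def \<eta>1'_def by (cases "\<tau> (f \<zeta>1) \<le> \<tau> (f \<eta>1)") (auto simp: max_def abs_less_iff)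
  have concl2: "\<exists>\<xi> \<eta>. \<xi> < \<eta> \<and> ?N (\<lambda>\<gamma>. x \<xi> \<gamma> - x \<eta> \<gamma>) < 1 + \<delta>"
  proof (intro exI conjI)
    show "\<xi>1 < \<eta>1'" by (rule lt1)
    show "?N (\<lambda>\<gamma>. x \<xi>1 \<gamma> - x \<eta>1' \<gamma>) < 1 + \<delta>"
      using up1 \<tau>le[of \<xi>1] \<tau>le[of \<eta>1'] e\<delta> e0 by (simp add: max_def split: if_splits)
  qed

  define p0 where "p0 = f \<zeta>0"
  define q0 where "q0 = f \<eta>0"
  have lt0: "p0 < q0" using z(1) f(1) unfolding p0_def q0_def by (simp add: strict_mono_less)
  have pW: "p0 \<in> W2" "q0 \<in> W2" unfolding p0_def q0_def by (rule fW)+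
  have ne0: "p0 \<noteq> q0" using lt0 by simp
  have TS0: "T p0 \<inter> S q0 = {}" "T q0 \<inter> S p0 = {}"
    using TS[of p0 q0] TS[of q0 p0] pW W21 ne0 by auto
  have TT0: "T p0 \<inter> T q0 = {}" using TT[of p0 q0] pW W21 ne0 by auto
  have col0': "\<And>u v. u \<in> T p0 \<Longrightarrow> v \<in> T q0 \<Longrightarrow> fst (c {u, v}) = 0"
    using col0 unfolding p0_def q0_def by blast
  have tp: "\<tau> p0 \<ge> 1 - 5*e" "\<tau> q0 \<ge> 1 - 5*e" using \<tau>big pW by auto
  have pick: "\<exists>a\<in>?A. \<tau> \<xi> - e < L2_set (yT \<xi>) a" for \<xi>
  proof -
    have bdd: "bdd_above ((\<lambda>a. L2_set (yT \<xi>) a) ` ?A)" using finyT[of \<xi>] unfolding finA_L2 .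
    have h: "\<tau> \<xi> - e < (SUP a\<in>?A. L2_set (yT \<xi>) a)" using e0 by (simp add: \<tau>_def normA_L2)
    show ?thesis using iffD1[OF less_cSUP_iff[OF Ane bdd] h] .
  qed
  obtain a where a: "a \<in> ?A" "\<tau> p0 - e < L2_set (yT p0) a" using pick[of p0] by blast
  obtain b where b: "b \<in> ?A" "\<tau> q0 - e < L2_set (yT q0) b" using pick[of q0] by blast
  define a' where "a' = a \<inter> T p0"
  define b' where "b' = b \<inter> T q0"
  have afin: "finite a" "finite b" using a(1) b(1) T0_fin by auto
  have a'fin: "finite a'" "finite b'" using afin unfolding a'_def b'_def by auto
  have La: "L2_set (yT p0) a = L2_set (y p0) a'" unfolding yT_def a'_def by (rule L2_restrict[OF afin(1)])
  have Lb: "L2_set (yT q0) b = L2_set (y q0) b'" unfolding yT_def b'_def by (rule L2_restrict[OF afin(2)])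
  have a'A: "a' \<in> ?A" unfolding a'_def by (rule T0_sub[OF a(1)]) blast
  have b'A: "b' \<in> ?A" unfolding b'_def by (rule T0_sub[OF b(1)]) blast
  have abA: "a' \<union> b' \<in> ?A"
    by (rule T0_union[OF a'A b'A]) (rule col0', auto simp: a'_def b'_def)
  have dab: "a' \<inter> b' = {}" using TT0 unfolding a'_def b'_def by blast
  define P where "P = (\<Sum>\<alpha>\<in>a'. (y p0 \<alpha>)\<^sup>2)"
  define Q where "Q = (\<Sum>\<alpha>\<in>b'. (y q0 \<alpha>)\<^sup>2)"
  have P0: "P \<ge> 0" "Q \<ge> 0" unfolding P_def Q_def by (simp_all add: sum_nonneg)
  have sumPQ: "(\<Sum>\<alpha>\<in>a' \<union> b'. (y p0 \<alpha> - y q0 \<alpha>)\<^sup>2) = P + Q"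
  proof -
    have "(\<Sum>\<alpha>\<in>a' \<union> b'. (y p0 \<alpha> - y q0 \<alpha>)\<^sup>2) =
        (\<Sum>\<alpha>\<in>a'. (y p0 \<alpha> - y q0 \<alpha>)\<^sup>2) + (\<Sum>\<alpha>\<in>b'. (y p0 \<alpha> - y q0 \<alpha>)\<^sup>2)"
      by (rule sum.union_disjoint[OF a'fin dab])
    also have "(\<Sum>\<alpha>\<in>a'. (y p0 \<alpha> - y q0 \<alpha>)\<^sup>2) = P" unfolding P_def
    proof (rule sum.cong[OF refl])
      fix \<alpha> assume "\<alpha> \<in> a'"
      hence "\<alpha> \<notin> S q0" using TS0(1) unfolding a'_def by blast
      thus "(y p0 \<alpha> - y q0 \<alpha>)\<^sup>2 = (y p0 \<alpha>)\<^sup>2" using Y0[of \<alpha> q0] by simp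
    qed
    also have "(\<Sum>\<alpha>\<in>b'. (y p0 \<alpha> - y q0 \<alpha>)\<^sup>2) = Q" unfolding Q_def
    proof (rule sum.cong[OF refl])
      fix \<alpha> assume "\<alpha> \<in> b'"
      hence "\<alpha> \<notin> S p0" using TS0(2) unfolding b'_def by blast
      thus "(y p0 \<alpha> - y q0 \<alpha>)\<^sup>2 = (y q0 \<alpha>)\<^sup>2" using Y0[of \<alpha> p0] by simp
    qed
    finally show ?thesis .
  qed
  have t0: "0 \<le> 1 - 6*e" using e1 by simp
  have sP: "1 - 6*e < sqrt P" using a(2) La tp(1) unfolding L2_set_def P_def by linarith
  have sQ: "1 - 6*e < sqrt Q" using b(2) Lb tp(2) unfolding L2_set_def Q_def by linarith
  have P1: "(1 - 6*e)\<^sup>2 < P"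
  proof -
    have "(1 - 6*e)\<^sup>2 < (sqrt P)\<^sup>2" by (rule power_strict_mono[OF sP t0]) simp
    thus ?thesis using P0(1) by simp
  qed
  have Q1: "(1 - 6*e)\<^sup>2 < Q"
  proof -
    have "(1 - 6*e)\<^sup>2 < (sqrt Q)\<^sup>2" by (rule power_strict_mono[OF sQ t0]) simp
    thus ?thesis using P0(2) by simp
  qed
  have "sqrt 2 * (1 - 6*e) = sqrt (2 * (1 - 6*e)\<^sup>2)" using t0 by (simp add: real_sqrt_mult)
  also have "\<dots> < sqrt (P + Q)" using P1 Q1 by (intro real_sqrt_less_mono) simp
  also have "\<dots> = L2_set (\<lambda>\<gamma>. y p0 \<gamma> - y q0 \<gamma>) (a' \<union> b')" unfolding L2_set_def sumPQ ..
  also have "\<dots> \<le> ?N (\<lambda>\<gamma>. y p0 \<gamma> - y q0 \<gamma>)" by (rule N_upper[OF finyy abA])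
  finally have low: "sqrt 2 * (1 - 6*e) < ?N (\<lambda>\<gamma>. y p0 \<gamma> - y q0 \<gamma>)" .
  have s2: "sqrt 2 < 3/2" by (rule real_less_lsqrt) (simp_all add: power2_eq_square)
  have "e * sqrt 2 \<le> e * (3/2)" using s2 e0 by (intro mult_left_mono) simp_all
  moreover have eq: "sqrt 2 * (1 - 6*e) = sqrt 2 - 6 * (e * sqrt 2)" by (simp add: algebra_simps)
  moreover have low2: "sqrt 2 - 6 * (e * sqrt 2) < ?N (\<lambda>\<gamma>. y p0 \<gamma> - y q0 \<gamma>)"
    using low unfolding eq .
  ultimately have "sqrt 2 - \<delta> < ?N (\<lambda>\<gamma>. x p0 \<gamma> - x q0 \<gamma>)"
    using xy_low[of p0 q0] e\<delta> e0 by linarith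
  hence concl1: "\<exists>\<alpha> \<beta>. \<alpha> < \<beta> \<and> ?N (\<lambda>\<gamma>. x \<alpha> \<gamma> - x \<beta> \<gamma>) > sqrt 2 - \<delta>"
    using lt0 by blast
  show ?thesis using concl1 concl2 by (rule conjI)
qed

theorem proposition4p2:
  fixes c :: "'w::wellorder set \<Rightarrow> 'i::zero_neq_one \<times> 'j"
    and I :: "'i set" and J :: "'j set"
  assumes "is_omega1 TYPE('w)"
    and "strong_T_coloring c I J"
  shows "\<forall>\<delta>>0. \<exists>\<epsilon>>0. \<forall>x :: 'w \<Rightarrow> ('w \<Rightarrow> real).
           inj x \<and>
           (\<forall>\<alpha>. x \<alpha> \<in> XA (T0_family c) \<and> normA (T0_family c) (x \<alpha>) = 1) \<and>
           (\<forall>\<alpha> \<beta>. \<alpha> \<noteq> \<beta> \<longrightarrow> normA (T0_family c) (\<lambda>\<gamma>. x \<alpha> \<gamma> - x \<beta> \<gamma>) \<ge> 1 - \<epsilon>)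
           \<longrightarrow>
           (\<exists>\<alpha> \<beta>. \<alpha> < \<beta> \<and> normA (T0_family c) (\<lambda>\<gamma>. x \<alpha> \<gamma> - x \<beta> \<gamma>) > sqrt 2 - \<delta>) \<and>
           (\<exists>\<xi> \<eta>. \<xi> < \<eta> \<and> normA (T0_family c) (\<lambda>\<gamma>. x \<xi> \<gamma> - x \<eta> \<gamma>) < 1 + \<delta>)"
    apply (intro allI impI)
  subgoal for \<delta>
    apply (rule exI[of _ "min (\<delta>/12) (1/12)"])
    apply (rule conjI)
    subgoal by simp
    apply (intro allI impI)
    subgoal for x
      apply (rule main_lemma[OF assms(1) assms(2), where e="min (\<delta>/12) (1/12)" and \<delta>=\<delta> and x=x])
      by auto
    done
  done

end
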